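(* Let $\psi$ satisfy Assumption $(\mathrm{A}_\ell)$ for some $\ell\ge 0$, and let $(\eta,v)$ with $\eta\in\mathcal C^1([0,\infty);\mathcal C(\overline\Omega_0))$, $v$ continuous, be a solution of the Lagrangian system (L) with initial history $v_s\in\mathcal C([-\tau,0]\times\overline\Omega_0)$ (compatible with $\eta$ as described in the context). Assume $R_V<+\infty$ and the flocking condition \[ d_V(0)+\int_{-\tau}^0 d_V(s)\,ds<\int_{d_X(-\tau)+R_V\tau}^\infty\widetilde\psi(s)\,ds . \] Then $\sup_{t\ge0}d_X(t)<+\infty$, and there is a constant $C>0$ independent of time such that \[ d_V(t)\le\Big(\max_{s\in[-\tau,0]}d_V(s)\Big)e^{-Ct}\qquad\text{for all }t\ge0. \]
   Context: Let $d\in\mathbb N$, $\tau\ge0$, $\Omega_0\subset\mathbb R^d$ a bounded open set, $\rho_0:\Omega_0\to[0,\infty)$ integrable with $\int_{\Omega_0}\rho_0=1$. Assumption $(\mathrm{A}_\ell)$: $\psi:\mathbb R^d\to(0,\infty)$ is continuous, $\psi(x)=\widetilde\psi(|x|)$ with $\widetilde\psi:[0,\infty)\to(0,\infty)$ nonincreasing, positive, bounded, $\widetilde\psi(0)=1$; if $\ell\ge1$, $\psi$ is $\mathcal C^\ell$ with uniformly bounded derivatives up to order $\ell$. Lagrangian system (L): for $x\in\Omega_0$, $t>0$: $\frac{d\eta_t(x)}{dt}=v_t(x)$, $\frac{dv_t(x)}{dt}=\frac{\int_{\Omega_0}\psi(\eta_t(x)-\eta_{t-\tau}(y))\rho_0(y)v_{t-\tau}(y)dy}{\int_{\Omega_0}\psi(\eta_t(x)-\eta_{t-\tau}(y))\rho_0(y)dy}-v_t(x)$,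 with prescribed initial history $(\eta_s,v_s)$, $s\in[-\tau,0]$, where $\eta_0(x)=x$ and $\frac{d\eta_s(x)}{ds}=v_s(x)$ for $s\in[-\tau,0]$ (the history is a piece of the characteristic flow). Notation: $d_X(t):=\max_{x,y\in\overline\Omega_0}|\eta_t(x)-\eta_t(y)|$, $d_V(t):=\max_{x,y\in\overline\Omega_0}|v_t(x)-v_t(y)|$ for $t\ge-\tau$, and $R_V:=\max_{s\in[-\tau,0]}\max_{x\in\overline\Omega_0}|v_s(x)|$. *)

theory Defs
  imports "HOL-Analysis.Analysis"
begin

text \<open>Assumption (A_0): psi radial, psi(x) = psit(|x|), psit positive, bounded,
  nonincreasing on [0,oo), psit 0 = 1, psi continuous.  (A_l) for l >= 1 only adds
  smoothness, so the theorem for "some l >= 0" is exactly the theorem under (A_0).\<close>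
definition psi_assm :: "('a::euclidean_space \<Rightarrow> real) \<Rightarrow> (real \<Rightarrow> real) \<Rightarrow> bool" where
  "psi_assm psi psit \<longleftrightarrow>
     continuous_on UNIV psi \<and>
     (\<forall>x. psi x = psit (norm x)) \<and>
     (\<forall>r\<ge>0. psit r > 0) \<and>
     (\<forall>r s. 0 \<le> r \<longrightarrow> r \<le> s \<longrightarrow> psit s \<le> psit r) \<and>
     bdd_above (psit ` {0..}) \<and>
     psit 0 = 1"

definition dX :: "(real \<Rightarrow> 'a::euclidean_space \<Rightarrow> 'a) \<Rightarrow> 'a set \<Rightarrow> real \<Rightarrow> real" where
  "dX eta \<Omega> t = (SUP xy \<in> closure \<Omega> \<times> closure \<Omega>. norm (eta t (fst xy) - eta t (snd xy)))"

definition dV :: "(real \<Rightarrow> 'a::euclidean_space \<Rightarrow> 'a) \<Rightarrow> 'a set \<Rightarrow> real \<Rightarrow> real" where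
  "dV v \<Omega> t = (SUP xy \<in> closure \<Omega> \<times> closure \<Omega>. norm (v t (fst xy) - v t (snd xy)))"

definition RV :: "(real \<Rightarrow> 'a::euclidean_space \<Rightarrow> 'a) \<Rightarrow> 'a set \<Rightarrow> real \<Rightarrow> real" where
  "RV v \<Omega> \<tau> = (SUP sx \<in> {-\<tau>..0} \<times> closure \<Omega>. norm (v (fst sx) (snd sx)))"

definition align :: "('a::euclidean_space \<Rightarrow> real) \<Rightarrow> ('a \<Rightarrow> real) \<Rightarrow> 'a set \<Rightarrow>
    (real \<Rightarrow> 'a \<Rightarrow> 'a) \<Rightarrow> (real \<Rightarrow> 'a \<Rightarrow> 'a) \<Rightarrow> real \<Rightarrow> real \<Rightarrow> 'a \<Rightarrow> 'a" where
  "align psi rho0 \<Omega> eta v \<tau> t x =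
     integral \<Omega> (\<lambda>y. (psi (eta t x - eta (t - \<tau>) y) * rho0 y) *\<^sub>R v (t - \<tau>) y) /\<^sub>R
     integral \<Omega> (\<lambda>y. psi (eta t x - eta (t - \<tau>) y) * rho0 y)"

end

theory Submission
  imports Defs
begin


lemma first_crossing:
  fixes f g :: "real \<Rightarrow> real"
  assumes cf: "continuous_on {0..} f" and cg: "continuous_on {0..} g"
    and f0: "f 0 < g 0"
    and step: "\<And>t. t > 0 \<Longrightarrow> (\<forall>s\<in>{0..t}. f s \<le> g s) \<Longrightarrow> f t < g t"
  shows "\<forall>t\<ge>0. f t < g t"
proof (rule ccontr)
  assume "\<not> (\<forall>t\<ge>0. f t < g t)"
  then obtain T where T: "T \<ge> 0" "g T \<le> f T" by force
  define h where "h = (\<lambda>s. g s - f s)"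
  have ch: "continuous_on {0..} h" unfolding h_def using cf cg by (intro continuous_intros)
  define S where "S = {s\<in>{0..T}. h s \<le> 0}"
  have chT: "continuous_on {0..T} h" using ch by (rule continuous_on_subset) auto
  have "closed S" unfolding S_def
    using continuous_closed_preimage[OF chT closed_atLeastAtMost, of "{..0}"]
    by (simp add: vimage_def Int_def)
  moreover have "S \<noteq> {}" using T unfolding S_def h_def by auto
  moreover have bS: "bdd_below S" unfolding S_def by (rule bdd_belowI[of _ 0]) auto
  ultimately have t1S: "Inf S \<in> S" by (intro closed_contains_Inf)
  define t1 where "t1 = Inf S"
  have below: "h s > 0" if "0 \<le> s" "s < t1" for s
  proof (rule ccontr)
    assume "\<not> h s > 0"
    hence "s \<in> S" using that t1S unfolding S_def t1_def by auto
    hence "t1 \<le> s" unfolding t1_def using bS by (rule cInf_lower)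
    thus False using that by simp
  qed
  have t1ge: "t1 \<ge> 0" "t1 \<le> T" "h t1 \<le> 0" using t1S unfolding S_def t1_def by auto
  have "t1 \<noteq> 0" using t1ge f0 unfolding h_def by auto
  hence t1pos: "t1 > 0" using t1ge by simp
  have "h t1 \<ge> 0"
  proof (rule continuous_ge_on_closure[of "{0..<t1}" h])
    show "continuous_on (closure {0..<t1}) h" using t1pos ch
      by (simp add: closure_atLeastLessThan) (rule continuous_on_subset, auto)
    show "t1 \<in> closure {0..<t1}" using t1pos by (simp add: closure_atLeastLessThan)
    show "\<And>x. x \<in> {0..<t1} \<Longrightarrow> 0 \<le> h x" using below by (auto intro: less_imp_le)
  qed
  hence "\<forall>s\<in>{0..t1}. f s \<le> g s" using below unfolding h_def
    by (metis atLeastAtMost_iff diff_ge_0_iff_ge less_eq_real_def)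
  hence "f t1 < g t1" using step t1pos by blast
  thus False using t1ge unfolding h_def by simp
qed



lemma sup_norm_diff_le:
  fixes F G :: "'k \<Rightarrow> 'b::real_normed_vector"
  assumes "K \<noteq> {}" "bdd_above ((\<lambda>k. norm (G k)) ` K)"
    and "\<And>k. k \<in> K \<Longrightarrow> norm (F k) \<le> norm (G k) + e"
  shows "(SUP k\<in>K. norm (F k)) \<le> (SUP k\<in>K. norm (G k)) + e"
proof -
  have "norm (F k) \<le> (SUP k\<in>K. norm (G k)) + e" if "k \<in> K" for k
    using assms(3)[OF that] cSUP_upper[OF that assms(2)] by linarith
  thus ?thesis using assms(1) by (intro cSUP_least) auto
qed

lemma cont_sup_norm:
  fixes F :: "real \<Rightarrow> 'k::metric_space \<Rightarrow> 'b::real_normed_vector"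
  assumes K: "compact K" and cF: "continuous_on ({a..} \<times> K) (\<lambda>(t,k). F t k)"
  shows "continuous_on {a..} (\<lambda>t. SUP k\<in>K. norm (F t k))"
proof (cases "K = {}")
  case True thus ?thesis by simp
next
  case Kne: False
  have cFt: "continuous_on K (F t)" if "t \<ge> a" for t
  proof -
    have "continuous_on K ((\<lambda>(t,k). F t k) \<circ> (\<lambda>k. (t,k)))"
      by (rule continuous_on_compose) (auto intro!: continuous_intros continuous_on_subset[OF cF] simp: that)
    thus ?thesis by (simp add: o_def)
  qed
  have bdd: "bdd_above ((\<lambda>k. norm (F t k)) ` K)" if "t \<ge> a" for t
  proof -
    have "compact (F t ` K)" using compact_continuous_image[OF cFt[OF that] K] .
    hence "bounded (F t ` K)" by (rule compact_imp_bounded)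
    then obtain B where "\<forall>y\<in>F t ` K. norm y \<le> B" by (auto simp: bounded_iff)
    thus ?thesis by (intro bdd_aboveI[of _ B]) auto
  qed
  show ?thesis
    unfolding continuous_on_iff
  proof (intro ballI allI impI)
    fix t0 e :: real assume t0: "t0 \<in> {a..}" and e: "e > 0"
    define S where "S = {a..t0+1} \<times> K"
    have "compact S" unfolding S_def using K by (intro compact_Times) auto
    moreover have "continuous_on S (\<lambda>(t,k). F t k)" unfolding S_def
      by (rule continuous_on_subset[OF cF]) auto
    ultimately have "uniformly_continuous_on S (\<lambda>(t,k). F t k)"
      by (intro compact_uniformly_continuous)
    then obtain d' where d': "d' > 0" "\<And>p q. p \<in> S \<Longrightarrow> q \<in> S \<Longrightarrow> dist p q < d' \<Longrightarrow>
        dist ((\<lambda>(t,k). F t k) p) ((\<lambda>(t,k). F t k) q) < e/2"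
      unfolding uniformly_continuous_on_def using e by (meson half_gt_zero)
    show "\<exists>d>0. \<forall>t'\<in>{a..}. dist t' t0 < d \<longrightarrow>
        dist (SUP k\<in>K. norm (F t' k)) (SUP k\<in>K. norm (F t0 k)) < e"
    proof (intro exI[of _ "min d' 1"] conjI ballI impI)
      show "min d' 1 > 0" using d' by simp
      fix t assume t: "t \<in> {a..}" "dist t t0 < min d' 1"
      have close: "norm (F t k - F t0 k) < e/2" if k: "k \<in> K" for k
      proof -
        have "(t,k) \<in> S" "(t0,k) \<in> S" using t t0 k unfolding S_def by (auto simp: dist_real_def)
        moreover have "dist (t,k) (t0,k) < d'" using t by (simp add: dist_Pair_Pair)
        ultimately show ?thesis using d'(2) by (fastforce simp: dist_norm)
      qed
      have "(SUP k\<in>K. norm (F t k)) \<le> (SUP k\<in>K. norm (F t0 k)) + e/2"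
      proof (rule sup_norm_diff_le)
        show "K \<noteq> {}" by fact
        show "bdd_above ((\<lambda>k. norm (F t0 k)) ` K)" using bdd t0 by simp
        fix k assume "k \<in> K"
        from close[OF this] show "norm (F t k) \<le> norm (F t0 k) + e/2"
          using norm_triangle_ineq2[of "F t k" "F t0 k"] by linarith
      qed
      moreover have "(SUP k\<in>K. norm (F t0 k)) \<le> (SUP k\<in>K. norm (F t k)) + e/2"
      proof (rule sup_norm_diff_le)
        show "K \<noteq> {}" by fact
        show "bdd_above ((\<lambda>k. norm (F t k)) ` K)" using bdd t by simp
        fix k assume "k \<in> K"
        from close[OF this] show "norm (F t0 k) \<le> norm (F t k) + e/2"
          using norm_triangle_ineq3[of "F t k" "F t0 k"] by (simp add: norm_minus_commute)
      qed
      ultimately show "dist (SUP k\<in>K. norm (F t k)) (SUP k\<in>K. norm (F t0 k)) < e"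
        using e by (simp add: dist_real_def abs_le_iff)
    qed
  qed
qed



lemma integrable_rho:
  fixes F :: "'a::euclidean_space \<Rightarrow> 'b::euclidean_space" and \<rho> :: "'a \<Rightarrow> real"
  assumes "open \<Omega>" "bounded \<Omega>" "\<forall>x\<in>\<Omega>. \<rho> x \<ge> 0" "\<rho> integrable_on \<Omega>"
     "continuous_on (closure \<Omega>) F"
  shows "(\<lambda>y. \<rho> y *\<^sub>R F y) integrable_on \<Omega>"
proof -
  have "\<rho> absolutely_integrable_on \<Omega>" using assms(3,4)
    by (simp add: nonnegative_absolutely_integrable_1)
  moreover have "F \<in> borel_measurable (lebesgue_on \<Omega>)"
    using assms(1,5) by (intro continuous_imp_measurable_on_sets_lebesgue)
      (auto intro: continuous_on_subset[OF _ closure_subset] borel_open)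
  moreover have "bounded (F ` \<Omega>)"
  proof -
    have "compact (F ` closure \<Omega>)" using assms(2,5) by (intro compact_continuous_image) auto
    thus ?thesis by (meson bounded_subset closure_subset compact_imp_bounded image_mono)
  qed
  moreover have "bilinear (\<lambda>x (c::real). c *\<^sub>R x)"
    by (auto simp: bilinear_def linear_iff algebra_simps)
  ultimately have "(\<lambda>y. \<rho> y *\<^sub>R F y) absolutely_integrable_on \<Omega>"
    using absolutely_integrable_bounded_measurable_product[of "\<lambda>x c. c *\<^sub>R x" F \<Omega> \<rho>] assms(1)
    by auto
  thus ?thesis by (simp add: absolutely_integrable_on_def)
qed

lemma integrable_rho_real:
  fixes g :: "'a::euclidean_space \<Rightarrow> real" and \<rho> :: "'a \<Rightarrow> real"
  assumes "open \<Omega>" "bounded \<Omega>" "\<forall>x\<in>\<Omega>. \<rho> x \<ge> 0" "\<rho> integrable_on \<Omega>"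
     "continuous_on (closure \<Omega>) g"
  shows "(\<lambda>y. \<rho> y * g y) integrable_on \<Omega>"
  using integrable_rho[OF assms] by simp

lemma avg_upper:
  fixes \<rho> \<phi> f :: "'a::euclidean_space \<Rightarrow> real"
  assumes \<Omega>: "open \<Omega>" "bounded \<Omega>" and \<rho>: "\<forall>x\<in>\<Omega>. \<rho> x \<ge> 0" "\<rho> integrable_on \<Omega>" "integral \<Omega> \<rho> = 1"
    and \<phi>: "continuous_on (closure \<Omega>) \<phi>" "\<forall>y\<in>\<Omega>. m \<le> \<phi> y \<and> \<phi> y \<le> 1" and m: "0 < m"
    and f: "continuous_on (closure \<Omega>) f" "\<forall>y\<in>\<Omega>. f y \<le> s"
  shows "integral \<Omega> (\<lambda>y. (\<phi> y * \<rho> y) * f y) / integral \<Omega> (\<lambda>y. \<phi> y * \<rho> y)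
      \<le> (1 - m) * s + m * integral \<Omega> (\<lambda>y. \<rho> y * f y)"
proof -
  define A where "A = integral \<Omega> (\<lambda>y. \<phi> y * \<rho> y)"
  define J where "J = integral \<Omega> (\<lambda>y. \<rho> y * f y)"
  define X where "X = integral \<Omega> (\<lambda>y. (\<phi> y * \<rho> y) * f y)"
  have hr: "(\<rho> has_integral 1) \<Omega>" using integrable_integral[OF \<rho>(2)] \<rho>(3) by simp
  have hA: "((\<lambda>y. \<phi> y * \<rho> y) has_integral A) \<Omega>"
  proof -
    have e: "(\<lambda>y. \<phi> y * \<rho> y) = (\<lambda>y. \<rho> y * \<phi> y)" by (auto simp: mult.commute)
    show ?thesis unfolding A_def e by (rule integrable_integral[OF integrable_rho_real[OF \<Omega> \<rho>(1,2) \<phi>(1)]])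
  qed
  have hJ: "((\<lambda>y. \<rho> y * f y) has_integral J) \<Omega>"
    unfolding J_def by (rule integrable_integral[OF integrable_rho_real[OF \<Omega> \<rho>(1,2) f(1)]])
  have cphf: "continuous_on (closure \<Omega>) (\<lambda>y. \<phi> y * f y)" using \<phi>(1) f(1) by (intro continuous_intros)
  have hX: "((\<lambda>y. (\<phi> y * \<rho> y) * f y) has_integral X) \<Omega>"
  proof -
    have e: "(\<lambda>y. (\<phi> y * \<rho> y) * f y) = (\<lambda>y. \<rho> y * (\<phi> y * f y))" by (auto simp: mult_ac)
    show ?thesis unfolding X_def e by (rule integrable_integral[OF integrable_rho_real[OF \<Omega> \<rho>(1,2) cphf]])
  qed
  have "m \<le> A"
  proof -
    have "((\<lambda>y. \<rho> y * m) has_integral 1 * m) \<Omega>" using hr by (rule has_integral_mult_left)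
    moreover have "\<And>x. x \<in> \<Omega> \<Longrightarrow> \<rho> x * m \<le> \<phi> x * \<rho> x"
      using \<phi>(2) \<rho>(1) by (simp add: mult.commute mult_right_mono)
    ultimately show ?thesis using has_integral_le[of _ "1*m" \<Omega> _ A] hA by simp
  qed
  have "A \<le> 1"
  proof -
    have "\<And>x. x \<in> \<Omega> \<Longrightarrow> \<phi> x * \<rho> x \<le> \<rho> x"
      using \<phi>(2) \<rho>(1) mult_right_mono[of "\<phi> x" 1 "\<rho> x" for x] by auto
    thus ?thesis using has_integral_le[OF hA hr] by blast
  qed
  have Apos: "A > 0" using \<open>m \<le> A\<close> m by simp
  have hR: "((\<lambda>y. (\<phi> y * \<rho> y - A * m * \<rho> y) * s + A * m * (\<rho> y * f y)) has_integral
      (A - A * m * 1) * s + A * m * J) \<Omega>"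
    by (intro has_integral_add has_integral_mult_left has_integral_mult_right has_integral_diff hA hJ hr)
  have pw: "(\<phi> y * \<rho> y) * f y \<le> (\<phi> y * \<rho> y - A * m * \<rho> y) * s + A * m * (\<rho> y * f y)"
    if y: "y \<in> \<Omega>" for y
  proof -
    have "A * m \<le> m" using \<open>A \<le> 1\<close> m by (simp add: mult_left_le_one_le)
    hence "0 \<le> \<phi> y - A * m" using \<phi>(2) y by force
    hence nn: "0 \<le> \<phi> y * \<rho> y - A * m * \<rho> y" using \<rho>(1) y
      by (metis left_diff_distrib mult_nonneg_nonneg)
    have "(\<phi> y * \<rho> y - A * m * \<rho> y) * f y \<le> (\<phi> y * \<rho> y - A * m * \<rho> y) * s"
      using mult_left_mono[OF _ nn, of "f y" s] f(2) y by simp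
    thus ?thesis by (simp add: algebra_simps)
  qed
  have "X \<le> (A - A * m * 1) * s + A * m * J"
    using has_integral_le[OF hX hR] pw by blast
  hence "X / A \<le> ((A - A * m * 1) * s + A * m * J) / A" using Apos by (simp add: divide_right_mono)
  also have "\<dots> = (1 - m) * s + m * J" using Apos by (simp add: field_simps)
  finally show ?thesis unfolding X_def A_def J_def .
qed

lemma avg_basic:
  fixes \<rho> \<phi> :: "'a::euclidean_space \<Rightarrow> real"
  assumes \<Omega>: "open \<Omega>" "bounded \<Omega>" and \<rho>: "\<forall>x\<in>\<Omega>. \<rho> x \<ge> 0" "\<rho> integrable_on \<Omega>" "integral \<Omega> \<rho> = 1"
    and \<phi>: "continuous_on (closure \<Omega>) \<phi>" "\<forall>y\<in>\<Omega>. m \<le> \<phi> y \<and> \<phi> y \<le> 1" and m: "0 < m"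
  shows "m \<le> integral \<Omega> (\<lambda>y. \<phi> y * \<rho> y)" "(\<lambda>y. \<phi> y * \<rho> y) integrable_on \<Omega>"
proof -
  have hr: "(\<rho> has_integral 1) \<Omega>" using integrable_integral[OF \<rho>(2)] \<rho>(3) by simp
  have e: "(\<lambda>y. \<phi> y * \<rho> y) = (\<lambda>y. \<rho> y * \<phi> y)" by (auto simp: mult.commute)
  show int: "(\<lambda>y. \<phi> y * \<rho> y) integrable_on \<Omega>" unfolding e by (rule integrable_rho_real[OF \<Omega> \<rho>(1,2) \<phi>(1)])
  have "((\<lambda>y. \<rho> y * m) has_integral 1 * m) \<Omega>" using hr by (rule has_integral_mult_left)
  moreover have "\<And>x. x \<in> \<Omega> \<Longrightarrow> \<rho> x * m \<le> \<phi> x * \<rho> x"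
    using \<phi>(2) \<rho>(1) by (simp add: mult.commute mult_right_mono)
  ultimately show "m \<le> integral \<Omega> (\<lambda>y. \<phi> y * \<rho> y)"
    using has_integral_le[of _ "1*m" \<Omega> _ "integral \<Omega> (\<lambda>y. \<phi> y * \<rho> y)"] integrable_integral[OF int] by simp
qed

lemma avg_norm:
  fixes \<rho> \<phi> :: "'a::euclidean_space \<Rightarrow> real" and V :: "'a \<Rightarrow> 'b::euclidean_space"
  assumes \<Omega>: "open \<Omega>" "bounded \<Omega>" and \<rho>: "\<forall>x\<in>\<Omega>. \<rho> x \<ge> 0" "\<rho> integrable_on \<Omega>" "integral \<Omega> \<rho> = 1"
    and \<phi>: "continuous_on (closure \<Omega>) \<phi>" "\<forall>y\<in>\<Omega>. m \<le> \<phi> y \<and> \<phi> y \<le> 1" and m: "0 < m"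
    and V: "continuous_on (closure \<Omega>) V" "\<forall>y\<in>\<Omega>. norm (V y) \<le> B"
  shows "norm (integral \<Omega> (\<lambda>y. (\<phi> y * \<rho> y) *\<^sub>R V y) /\<^sub>R integral \<Omega> (\<lambda>y. \<phi> y * \<rho> y)) \<le> B"
proof -
  define A where "A = integral \<Omega> (\<lambda>y. \<phi> y * \<rho> y)"
  have Am: "m \<le> A" and intA: "(\<lambda>y. \<phi> y * \<rho> y) integrable_on \<Omega>"
    using avg_basic[OF \<Omega> \<rho> \<phi> m] unfolding A_def by auto
  have cphV: "continuous_on (closure \<Omega>) (\<lambda>y. \<phi> y *\<^sub>R V y)" using \<phi>(1) V(1) by (intro continuous_intros)
  have e: "(\<lambda>y. (\<phi> y * \<rho> y) *\<^sub>R V y) = (\<lambda>y. \<rho> y *\<^sub>R (\<phi> y *\<^sub>R V y))" by (auto simp: mult.commute)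
  have intN: "(\<lambda>y. (\<phi> y * \<rho> y) *\<^sub>R V y) integrable_on \<Omega>"
    unfolding e by (rule integrable_rho[OF \<Omega> \<rho>(1,2) cphV])
  have "norm (integral \<Omega> (\<lambda>y. (\<phi> y * \<rho> y) *\<^sub>R V y)) \<le> integral \<Omega> (\<lambda>y. (\<phi> y * \<rho> y) * B)"
  proof (rule integral_norm_bound_integral[OF intN])
    show "(\<lambda>y. \<phi> y * \<rho> y * B) integrable_on \<Omega>" using intA by (rule integrable_on_mult_left)
    fix y assume y: "y \<in> \<Omega>"
    have "0 \<le> \<phi> y * \<rho> y" using \<phi>(2) \<rho>(1) m y by (meson less_le_trans less_imp_le mult_nonneg_nonneg)
    thus "norm ((\<phi> y * \<rho> y) *\<^sub>R V y) \<le> \<phi> y * \<rho> y * B" using V(2) y by (simp add: mult_left_mono)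
  qed
  also have "\<dots> = A * B" unfolding A_def by (simp add: integral_mult_left)
  finally show ?thesis unfolding A_def[symmetric] using Am m
    by (simp add: divide_simps mult.commute)
qed

lemma avg_diff:
  fixes \<rho> \<phi>1 \<phi>2 :: "'a::euclidean_space \<Rightarrow> real" and V :: "'a \<Rightarrow> 'b::euclidean_space"
  assumes \<Omega>: "open \<Omega>" "bounded \<Omega>" and \<rho>: "\<forall>x\<in>\<Omega>. \<rho> x \<ge> 0" "\<rho> integrable_on \<Omega>" "integral \<Omega> \<rho> = 1"
    and \<phi>1: "continuous_on (closure \<Omega>) \<phi>1" "\<forall>y\<in>\<Omega>. m \<le> \<phi>1 y \<and> \<phi>1 y \<le> 1"
    and \<phi>2: "continuous_on (closure \<Omega>) \<phi>2" "\<forall>y\<in>\<Omega>. m \<le> \<phi>2 y \<and> \<phi>2 y \<le> 1" and m: "0 < m"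
    and V: "continuous_on (closure \<Omega>) V" "\<forall>y\<in>\<Omega>. \<forall>z\<in>\<Omega>. norm (V y - V z) \<le> D"
  shows "norm (integral \<Omega> (\<lambda>y. (\<phi>1 y * \<rho> y) *\<^sub>R V y) /\<^sub>R integral \<Omega> (\<lambda>y. \<phi>1 y * \<rho> y)
            - integral \<Omega> (\<lambda>y. (\<phi>2 y * \<rho> y) *\<^sub>R V y) /\<^sub>R integral \<Omega> (\<lambda>y. \<phi>2 y * \<rho> y)) \<le> (1 - m) * D"
proof -
  have "\<Omega> \<noteq> {}" using \<rho>(3) by auto
  then obtain z0 where z0: "z0 \<in> \<Omega>" by auto
  have D0: "0 \<le> D" using V(2) z0 by force
  have m1: "m \<le> 1" using \<phi>1(2) z0 by force
  define w where "w = integral \<Omega> (\<lambda>y. (\<phi>1 y * \<rho> y) *\<^sub>R V y) /\<^sub>R integral \<Omega> (\<lambda>y. \<phi>1 y * \<rho> y)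
            - integral \<Omega> (\<lambda>y. (\<phi>2 y * \<rho> y) *\<^sub>R V y) /\<^sub>R integral \<Omega> (\<lambda>y. \<phi>2 y * \<rho> y)"
  show ?thesis
  proof (cases "w = 0")
    case True thus ?thesis using D0 m1 unfolding w_def[symmetric] by simp
  next
    case False
    define e where "e = w /\<^sub>R norm w"
    define f where "f = (\<lambda>y. e \<bullet> V y)"
    have cf: "continuous_on (closure \<Omega>) f" unfolding f_def using V(1) by (intro continuous_intros)
    have fD: "f y \<le> f z + D" if "y \<in> \<Omega>" "z \<in> \<Omega>" for y z
    proof -
      have "f y - f z = e \<bullet> (V y - V z)" unfolding f_def by (simp add: inner_diff_right)
      also have "\<dots> \<le> norm e * norm (V y - V z)" by (rule norm_cauchy_schwarz)
      also have "\<dots> = norm (V y - V z)" using False unfolding e_def by simp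
      also have "\<dots> \<le> D" using V(2) that by blast
      finally show ?thesis by simp
    qed
    define s where "s = (SUP y\<in>\<Omega>. f y)"
    define i where "i = (INF y\<in>\<Omega>. f y)"
    have bddA: "bdd_above (f ` \<Omega>)" using fD z0 by (intro bdd_aboveI[of _ "f z0 + D"]) auto
    have bddB: "bdd_below (f ` \<Omega>)" using fD z0 by (intro bdd_belowI[of _ "f z0 - D"]) force
    have fs: "\<forall>y\<in>\<Omega>. f y \<le> s" unfolding s_def using bddA by (auto intro: cSUP_upper)
    have fi: "\<forall>y\<in>\<Omega>. i \<le> f y" unfolding i_def using bddB by (auto intro: cINF_lower)
    have "s - D \<le> i" unfolding i_def
    proof (rule cINF_greatest[OF \<open>\<Omega> \<noteq> {}\<close>])
      fix z assume z: "z \<in> \<Omega>"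
      have "s \<le> f z + D" unfolding s_def using \<open>\<Omega> \<noteq> {}\<close> fD z by (intro cSUP_least) auto
      thus "s - D \<le> f z" by simp
    qed
    have key: "e \<bullet> (integral \<Omega> (\<lambda>y. (\<phi> y * \<rho> y) *\<^sub>R V y) /\<^sub>R integral \<Omega> (\<lambda>y. \<phi> y * \<rho> y))
        = integral \<Omega> (\<lambda>y. (\<phi> y * \<rho> y) * f y) / integral \<Omega> (\<lambda>y. \<phi> y * \<rho> y)"
      if "continuous_on (closure \<Omega>) \<phi>" for \<phi>
    proof -
      have cphV: "continuous_on (closure \<Omega>) (\<lambda>y. \<phi> y *\<^sub>R V y)" using that V(1) by (intro continuous_intros)
      have eq: "(\<lambda>y. (\<phi> y * \<rho> y) *\<^sub>R V y) = (\<lambda>y. \<rho> y *\<^sub>R (\<phi> y *\<^sub>R V y))" by (auto simp: mult.commute)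
      have intN: "(\<lambda>y. (\<phi> y * \<rho> y) *\<^sub>R V y) integrable_on \<Omega>"
        unfolding eq by (rule integrable_rho[OF \<Omega> \<rho>(1,2) cphV])
      have "integral \<Omega> ((\<lambda>u. e \<bullet> u) \<circ> (\<lambda>y. (\<phi> y * \<rho> y) *\<^sub>R V y)) = e \<bullet> integral \<Omega> (\<lambda>y. (\<phi> y * \<rho> y) *\<^sub>R V y)"
        by (rule integral_linear[OF intN bounded_linear_inner_right])
      moreover have "((\<lambda>u. e \<bullet> u) \<circ> (\<lambda>y. (\<phi> y * \<rho> y) *\<^sub>R V y)) = (\<lambda>y. (\<phi> y * \<rho> y) * f y)"
        unfolding f_def by (auto simp: o_def)
      ultimately show ?thesis by (simp add: divide_inverse mult.commute)
    qed
    have u1: "e \<bullet> (integral \<Omega> (\<lambda>y. (\<phi>1 y * \<rho> y) *\<^sub>R V y) /\<^sub>R integral \<Omega> (\<lambda>y. \<phi>1 y * \<rho> y))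
        \<le> (1 - m) * s + m * integral \<Omega> (\<lambda>y. \<rho> y * f y)"
      unfolding key[OF \<phi>1(1)] by (rule avg_upper[OF \<Omega> \<rho> \<phi>1 m cf fs])
    have cmf: "continuous_on (closure \<Omega>) (\<lambda>y. - f y)" using cf by (intro continuous_intros)
    have "integral \<Omega> (\<lambda>y. (\<phi>2 y * \<rho> y) * - f y) / integral \<Omega> (\<lambda>y. \<phi>2 y * \<rho> y)
        \<le> (1 - m) * (- i) + m * integral \<Omega> (\<lambda>y. \<rho> y * - f y)"
      by (rule avg_upper[OF \<Omega> \<rho> \<phi>2 m cmf]) (use fi in auto)
    hence u2: "(1 - m) * i + m * integral \<Omega> (\<lambda>y. \<rho> y * f y) \<le>
        e \<bullet> (integral \<Omega> (\<lambda>y. (\<phi>2 y * \<rho> y) *\<^sub>R V y) /\<^sub>R integral \<Omega> (\<lambda>y. \<phi>2 y * \<rho> y))"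
      unfolding key[OF \<phi>2(1)] by (simp add: integral_neg)
    have "norm w = e \<bullet> w" unfolding e_def using False by (simp add: inner_commute power2_norm_eq_inner[symmetric] power2_eq_square)
    also have "\<dots> \<le> (1 - m) * (s - i)" using u1 u2 unfolding w_def by (simp add: inner_diff_right algebra_simps)
    also have "\<dots> \<le> (1 - m) * D" using \<open>s - D \<le> i\<close> m1 by (simp add: mult_left_mono)
    finally show ?thesis unfolding w_def .
  qed
qed



lemma voc:
  fixes u f :: "real \<Rightarrow> 'b::euclidean_space" and G :: "real \<Rightarrow> real"
  assumes t: "t \<ge> 0" and cu: "continuous_on {0..t} u"
    and du: "\<And>s. s \<in> {0<..<t} \<Longrightarrow> (u has_vector_derivative (f s - u s)) (at s)"
    and fG: "\<And>s. s \<in> {0..t} \<Longrightarrow> norm (f s) \<le> G s" and cG: "continuous_on {0..t} G"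
  shows "norm (u t) \<le> exp (-t) * norm (u 0) + exp (-t) * integral {0..t} (\<lambda>s. exp s * G s)"
proof -
  define \<phi> where "\<phi> = (\<lambda>s. exp s *\<^sub>R u s)"
  have "((\<lambda>s. exp s *\<^sub>R f s) has_integral \<phi> t - \<phi> 0) {0..t}"
  proof (rule fundamental_theorem_of_calculus_interior[OF t])
    show "continuous_on {0..t} \<phi>" unfolding \<phi>_def using cu by (intro continuous_intros)
    fix s assume s: "s \<in> {0<..<t}"
    have "(\<phi> has_vector_derivative (exp s *\<^sub>R (f s - u s) + exp s *\<^sub>R u s)) (at s)"
      unfolding \<phi>_def
      by (rule has_vector_derivative_scaleR[OF DERIV_exp du[OF s]])
    thus "(\<phi> has_vector_derivative exp s *\<^sub>R f s) (at s)" by (simp add: algebra_simps)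
  qed
  hence eq: "integral {0..t} (\<lambda>s. exp s *\<^sub>R f s) = \<phi> t - \<phi> 0"
    and int: "(\<lambda>s. exp s *\<^sub>R f s) integrable_on {0..t}" by (auto simp: integral_unique has_integral_integrable)
  have "norm (\<phi> t - \<phi> 0) \<le> integral {0..t} (\<lambda>s. exp s * G s)"
    unfolding eq[symmetric]
  proof (rule integral_norm_bound_integral[OF int])
    show "(\<lambda>s. exp s * G s) integrable_on {0..t}"
      using cG by (intro integrable_continuous_interval continuous_intros)
    fix s assume "s \<in> {0..t}"
    thus "norm (exp s *\<^sub>R f s) \<le> exp s * G s" using fG by (simp add: mult_left_mono)
  qed
  hence "exp t * norm (u t) \<le> norm (u 0) + integral {0..t} (\<lambda>s. exp s * G s)"
    unfolding \<phi>_def using norm_triangle_ineq2[of "exp t *\<^sub>R u t" "exp 0 *\<^sub>R u 0"] by simp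
  hence "exp (-t) * (exp t * norm (u t)) \<le> exp (-t) * (norm (u 0) + integral {0..t} (\<lambda>s. exp s * G s))"
    by (simp add: mult_left_mono)
  thus ?thesis by (simp add: exp_minus field_simps)
qed




lemma pd_upper:
  fixes f :: "'a::metric_space \<Rightarrow> 'b::real_normed_vector"
  assumes "compact K" "continuous_on K f" "x \<in> K" "y \<in> K"
  shows "norm (f x - f y) \<le> (SUP xy\<in>K \<times> K. norm (f (fst xy) - f (snd xy)))"
proof -
  have "compact (f ` K)" using assms by (intro compact_continuous_image)
  then obtain B where B: "\<forall>z\<in>f ` K. norm z \<le> B" using compact_imp_bounded bounded_iff by metis
  have "bdd_above ((\<lambda>xy. norm (f (fst xy) - f (snd xy))) ` (K \<times> K))"
  proof (rule bdd_aboveI[of _ "2*B"])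
    fix r assume "r \<in> (\<lambda>xy. norm (f (fst xy) - f (snd xy))) ` (K \<times> K)"
    then obtain a b where ab: "a \<in> K" "b \<in> K" "r = norm (f a - f b)" by auto
    have "norm (f a - f b) \<le> norm (f a) + norm (f b)" by (rule norm_triangle_ineq4)
    moreover have "norm (f a) \<le> B" "norm (f b) \<le> B" using B ab by auto
    ultimately show "r \<le> 2*B" using ab by linarith
  qed
  from cSUP_upper[OF _ this, of "(x,y)"] assms show ?thesis by auto
qed

lemma pd_least:
  fixes f :: "'a::metric_space \<Rightarrow> 'b::real_normed_vector"
  assumes "S \<noteq> {}" "continuous_on (closure S) f" "\<forall>x\<in>S. \<forall>y\<in>S. norm (f x - f y) \<le> c"
  shows "(SUP xy\<in>closure S \<times> closure S. norm (f (fst xy) - f (snd xy))) \<le> c"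
proof (rule cSUP_least)
  show "closure S \<times> closure S \<noteq> {}" using assms(1) by auto
  fix xy assume xy: "xy \<in> closure S \<times> closure S"
  have "continuous_on (closure (S \<times> S)) (\<lambda>p. f (fst p) - f (snd p))"
    unfolding closure_Times
    by (intro continuous_intros continuous_on_compose2[OF assms(2)]) auto
  moreover have "\<forall>p\<in>S \<times> S. norm (f (fst p) - f (snd p)) \<le> c" using assms(3) by auto
  moreover have "xy \<in> closure (S \<times> S)" using xy by (simp add: closure_Times)
  ultimately show "norm (f (fst xy) - f (snd xy)) \<le> c" by (rule continuous_on_closure_norm_le)
qed

lemma sn_upper:
  fixes f :: "'a::metric_space \<Rightarrow> 'b::real_normed_vector"
  assumes "compact K" "continuous_on K f" "x \<in> K"
  shows "norm (f x) \<le> (SUP x\<in>K. norm (f x))"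
proof -
  have "compact (f ` K)" using assms by (intro compact_continuous_image)
  then obtain B where B: "\<forall>z\<in>f ` K. norm z \<le> B" using compact_imp_bounded bounded_iff by metis
  have "bdd_above ((\<lambda>x. norm (f x)) ` K)" using B by (intro bdd_aboveI[of _ B]) auto
  from cSUP_upper[OF _ this] assms show ?thesis by auto
qed

lemma sn_least:
  fixes f :: "'a::metric_space \<Rightarrow> 'b::real_normed_vector"
  assumes "S \<noteq> {}" "continuous_on (closure S) f" "\<forall>x\<in>S. norm (f x) \<le> c"
  shows "(SUP x\<in>closure S. norm (f x)) \<le> c"
proof (rule cSUP_least)
  show "closure S \<noteq> {}" using assms(1) by auto
  fix x assume "x \<in> closure S"
  with assms show "norm (f x) \<le> c" by (intro continuous_on_closure_norm_le) auto
qed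

lemma posmin:
  fixes \<phi> :: "'a::metric_space \<Rightarrow> real"
  assumes "compact K" "K \<noteq> {}" "continuous_on K \<phi>" "\<forall>y\<in>K. \<phi> y > 0"
  shows "\<exists>m>0. \<forall>y\<in>K. m \<le> \<phi> y"
  using continuous_attains_inf[OF assms(1-3)] assms(4) by blast

lemma cont_slice1:
  assumes "continuous_on (A \<times> B) (\<lambda>(t, x). F t x)" "t \<in> A"
  shows "continuous_on B (F t)"
proof -
  have c1: "continuous_on B (\<lambda>x. (t, x))" by (intro continuous_intros)
  have c2: "continuous_on ((\<lambda>x. (t, x)) ` B) (\<lambda>(t, x). F t x)"
    by (rule continuous_on_subset[OF assms(1)]) (use assms(2) in auto)
  from continuous_on_compose[OF c1 c2] show ?thesis by (simp add: o_def)
qed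

lemma cont_slice2:
  assumes "continuous_on (A \<times> B) (\<lambda>(t, x). F t x)" "x \<in> B"
  shows "continuous_on A (\<lambda>t. F t x)"
proof -
  have c1: "continuous_on A (\<lambda>t. (t, x))" by (intro continuous_intros)
  have c2: "continuous_on ((\<lambda>t. (t, x)) ` A) (\<lambda>(t, x). F t x)"
    by (rule continuous_on_subset[OF assms(1)]) (use assms(2) in auto)
  from continuous_on_compose[OF c1 c2] show ?thesis by (simp add: o_def)
qed

lemma deriv_int_at:
  fixes h :: "real \<Rightarrow> real"
  assumes "continuous_on {a..} h" "t > a"
  shows "((\<lambda>u. integral {a..u} h) has_real_derivative h t) (at t)"
proof -
  have c: "continuous_on {a..t+1} h" by (rule continuous_on_subset[OF assms(1)]) auto
  have tin: "t \<in> {a..t+1}" using assms(2) by simp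
  have d: "((\<lambda>u. integral {a..u} h) has_real_derivative h t) (at t within {a..t+1})"
    by (rule integral_has_real_derivative[OF c tin])
  have "t \<in> interior {a..t+1}" using assms(2) by (simp add: interior_atLeastAtMost_real)
  hence "at t within {a..t+1} = at t" by (rule at_within_interior)
  with d show ?thesis by simp
qed

locale sys =
  fixes \<Omega>0 :: "'a::euclidean_space set"
    and \<tau> :: real
    and rho0 :: "'a \<Rightarrow> real"
    and psi :: "'a \<Rightarrow> real" and psit :: "real \<Rightarrow> real"
    and eta v :: "real \<Rightarrow> 'a \<Rightarrow> 'a"
  assumes tau: "\<tau> \<ge> 0"
    and dom: "bounded \<Omega>0" "open \<Omega>0"
    and rho_nonneg: "\<forall>x\<in>\<Omega>0. rho0 x \<ge> 0"
    and rho_int: "rho0 integrable_on \<Omega>0"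
    and rho_mass: "integral \<Omega>0 rho0 = 1"
    and psi: "psi_assm psi psit"
    and eta_cont: "continuous_on ({-\<tau>..} \<times> closure \<Omega>0) (\<lambda>(t, x). eta t x)"
    and v_cont: "continuous_on ({-\<tau>..} \<times> closure \<Omega>0) (\<lambda>(t, x). v t x)"
    and eta_deriv: "\<forall>x\<in>\<Omega>0. \<forall>t\<ge>-\<tau>.
        ((\<lambda>s. eta s x) has_vector_derivative v t x) (at t within {-\<tau>..})"
    and v_deriv: "\<forall>x\<in>\<Omega>0. \<forall>t>0.
        ((\<lambda>s. v s x) has_vector_derivative (align psi rho0 \<Omega>0 eta v \<tau> t x - v t x)) (at t)"
    and RV_fin: "bdd_above ((\<lambda>(s, x). norm (v s x)) ` ({-\<tau>..0} \<times> closure \<Omega>0))"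
begin

abbreviation "K \<equiv> closure \<Omega>0"
abbreviation "DV \<equiv> dV v \<Omega>0"
abbreviation "DX \<equiv> dX eta \<Omega>0"
abbreviation "R \<equiv> RV v \<Omega>0 \<tau>"
abbreviation "W \<equiv> align psi rho0 \<Omega>0 eta v \<tau>"

lemma nonempty: "\<Omega>0 \<noteq> {}" using rho_mass by auto
lemma Kcompact: "compact K" using dom(1) by (simp add: compact_closure)
lemma Kne: "K \<noteq> {}" using nonempty by simp

lemma psit_pos: "r \<ge> 0 \<Longrightarrow> psit r > 0" using psi unfolding psi_assm_def by auto
lemma psit_mono: "0 \<le> r \<Longrightarrow> r \<le> s \<Longrightarrow> psit s \<le> psit r" using psi unfolding psi_assm_def by auto
lemma psit0: "psit 0 = 1" using psi unfolding psi_assm_def by auto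
lemma psit_le1: "r \<ge> 0 \<Longrightarrow> psit r \<le> 1" using psit_mono[of 0 r] psit0 by simp
lemma psi_eq: "psi z = psit (norm z)" using psi unfolding psi_assm_def by auto
lemma psi_cont: "continuous_on UNIV psi" using psi unfolding psi_assm_def by auto

lemma psit_cont: "continuous_on {0..} psit"
proof -
  obtain e :: 'a where e: "e \<in> Basis" using nonempty_Basis by blast
  have c1: "continuous_on {0..} (\<lambda>r. r *\<^sub>R e)" by (intro continuous_intros)
  have c2: "continuous_on ((\<lambda>r. r *\<^sub>R e) ` {0..}) psi" using psi_cont continuous_on_subset by blast
  have "continuous_on {0..} (psi \<circ> (\<lambda>r. r *\<^sub>R e))" by (rule continuous_on_compose[OF c1 c2])
  moreover have "\<And>r. r \<in> {0..} \<Longrightarrow> (psi \<circ> (\<lambda>r. r *\<^sub>R e)) r = psit r"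
    using e by (simp add: psi_eq)
  ultimately show ?thesis using continuous_on_cong by blast
qed

lemma v_cont_t: "t \<ge> -\<tau> \<Longrightarrow> continuous_on K (v t)"
  by (rule cont_slice1[OF v_cont]) simp

lemma eta_cont_t: "t \<ge> -\<tau> \<Longrightarrow> continuous_on K (eta t)"
  by (rule cont_slice1[OF eta_cont]) simp

lemma v_cont_x: "x \<in> K \<Longrightarrow> continuous_on {-\<tau>..} (\<lambda>t. v t x)"
  by (rule cont_slice2[OF v_cont])

lemma eta_cont_x: "x \<in> K \<Longrightarrow> continuous_on {-\<tau>..} (\<lambda>t. eta t x)"
  by (rule cont_slice2[OF eta_cont])

lemma DV_upper: "t \<ge> -\<tau> \<Longrightarrow> x \<in> K \<Longrightarrow> y \<in> K \<Longrightarrow> norm (v t x - v t y) \<le> DV t"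
  unfolding dV_def by (rule pd_upper[OF Kcompact v_cont_t])

lemma DX_upper: "t \<ge> -\<tau> \<Longrightarrow> x \<in> K \<Longrightarrow> y \<in> K \<Longrightarrow> norm (eta t x - eta t y) \<le> DX t"
  unfolding dX_def by (rule pd_upper[OF Kcompact eta_cont_t])

lemma DV_least: "t \<ge> -\<tau> \<Longrightarrow> \<forall>x\<in>\<Omega>0. \<forall>y\<in>\<Omega>0. norm (v t x - v t y) \<le> c \<Longrightarrow> DV t \<le> c"
  unfolding dV_def by (rule pd_least[OF nonempty v_cont_t])

lemma DX_least: "t \<ge> -\<tau> \<Longrightarrow> \<forall>x\<in>\<Omega>0. \<forall>y\<in>\<Omega>0. norm (eta t x - eta t y) \<le> c \<Longrightarrow> DX t \<le> c"
  unfolding dX_def by (rule pd_least[OF nonempty eta_cont_t])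

lemma DV_nonneg: "t \<ge> -\<tau> \<Longrightarrow> DV t \<ge> 0"
proof -
  assume t: "t \<ge> -\<tau>"
  obtain x where "x \<in> K" using Kne by (meson ex_in_conv)
  from DV_upper[OF t this this] show ?thesis by simp
qed

lemma DX_nonneg: "t \<ge> -\<tau> \<Longrightarrow> DX t \<ge> 0"
proof -
  assume t: "t \<ge> -\<tau>"
  obtain x where "x \<in> K" using Kne by (meson ex_in_conv)
  from DX_upper[OF t this this] show ?thesis by simp
qed

lemma DV_cont: "continuous_on {-\<tau>..} DV"
proof -
  have "continuous_on ({-\<tau>..} \<times> (K \<times> K)) (\<lambda>(t,k). v t (fst k) - v t (snd k))"
  proof -
    have c1: "continuous_on ({-\<tau>..} \<times> (K \<times> K)) ((\<lambda>(t, x). v t x) \<circ> (\<lambda>(t,k). (t, fst k)))"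
    proof (rule continuous_on_compose)
      show "continuous_on ({-\<tau>..} \<times> (K \<times> K)) (\<lambda>(t,k). (t, fst k))" by (auto simp: case_prod_unfold intro!: continuous_intros)
      show "continuous_on ((\<lambda>(t,k). (t, fst k)) ` ({-\<tau>..} \<times> (K \<times> K))) (\<lambda>(t, x). v t x)"
        by (rule continuous_on_subset[OF v_cont]) auto
    qed
    have c2: "continuous_on ({-\<tau>..} \<times> (K \<times> K)) ((\<lambda>(t, x). v t x) \<circ> (\<lambda>(t,k). (t, snd k)))"
    proof (rule continuous_on_compose)
      show "continuous_on ({-\<tau>..} \<times> (K \<times> K)) (\<lambda>(t,k). (t, snd k))" by (auto simp: case_prod_unfold intro!: continuous_intros)
      show "continuous_on ((\<lambda>(t,k). (t, snd k)) ` ({-\<tau>..} \<times> (K \<times> K))) (\<lambda>(t, x). v t x)"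
        by (rule continuous_on_subset[OF v_cont]) auto
    qed
    show ?thesis using continuous_on_diff[OF c1 c2] by (simp add: o_def case_prod_unfold)
  qed
  from cont_sup_norm[OF compact_Times[OF Kcompact Kcompact] this]
  show ?thesis unfolding dV_def by simp
qed

lemma DX_cont: "continuous_on {-\<tau>..} DX"
proof -
  have "continuous_on ({-\<tau>..} \<times> (K \<times> K)) (\<lambda>(t,k). eta t (fst k) - eta t (snd k))"
  proof -
    have c1: "continuous_on ({-\<tau>..} \<times> (K \<times> K)) ((\<lambda>(t, x). eta t x) \<circ> (\<lambda>(t,k). (t, fst k)))"
    proof (rule continuous_on_compose)
      show "continuous_on ({-\<tau>..} \<times> (K \<times> K)) (\<lambda>(t,k). (t, fst k))" by (auto simp: case_prod_unfold intro!: continuous_intros)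
      show "continuous_on ((\<lambda>(t,k). (t, fst k)) ` ({-\<tau>..} \<times> (K \<times> K))) (\<lambda>(t, x). eta t x)"
        by (rule continuous_on_subset[OF eta_cont]) auto
    qed
    have c2: "continuous_on ({-\<tau>..} \<times> (K \<times> K)) ((\<lambda>(t, x). eta t x) \<circ> (\<lambda>(t,k). (t, snd k)))"
    proof (rule continuous_on_compose)
      show "continuous_on ({-\<tau>..} \<times> (K \<times> K)) (\<lambda>(t,k). (t, snd k))" by (auto simp: case_prod_unfold intro!: continuous_intros)
      show "continuous_on ((\<lambda>(t,k). (t, snd k)) ` ({-\<tau>..} \<times> (K \<times> K))) (\<lambda>(t, x). eta t x)"
        by (rule continuous_on_subset[OF eta_cont]) auto
    qed
    show ?thesis using continuous_on_diff[OF c1 c2] by (simp add: o_def case_prod_unfold)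
  qed
  from cont_sup_norm[OF compact_Times[OF Kcompact Kcompact] this]
  show ?thesis unfolding dX_def by simp
qed

definition M :: "real \<Rightarrow> real" where "M t = (SUP x\<in>K. norm (v t x))"

lemma M_cont: "continuous_on {-\<tau>..} M"
  unfolding M_def by (rule cont_sup_norm[OF Kcompact v_cont])

lemma M_upper: "t \<ge> -\<tau> \<Longrightarrow> x \<in> K \<Longrightarrow> norm (v t x) \<le> M t"
  unfolding M_def by (rule sn_upper[OF Kcompact v_cont_t])

lemma M_least: "t \<ge> -\<tau> \<Longrightarrow> \<forall>x\<in>\<Omega>0. norm (v t x) \<le> c \<Longrightarrow> M t \<le> c"
  unfolding M_def by (rule sn_least[OF nonempty v_cont_t])

lemma R_upper: "s \<in> {-\<tau>..0} \<Longrightarrow> x \<in> K \<Longrightarrow> norm (v s x) \<le> R"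
proof -
  assume "s \<in> {-\<tau>..0}" "x \<in> K"
  hence "(s,x) \<in> {-\<tau>..0} \<times> K" by simp
  from cSUP_upper[OF this RV_fin] show ?thesis unfolding RV_def by (simp add: case_prod_unfold)
qed

lemma R_nonneg: "R \<ge> 0"
proof -
  obtain x where "x \<in> K" using Kne by (meson ex_in_conv)
  have "0 \<in> {-\<tau>..0}" using tau by simp
  from R_upper[OF this \<open>x \<in> K\<close>] show ?thesis using norm_ge_zero[of "v 0 x"] by linarith
qed

end



lemma int_exp_lin:
  fixes k t :: real
  assumes "k \<noteq> 0" "t \<ge> 0"
  shows "((\<lambda>s. exp (k * s)) has_integral (exp (k * t) - 1) / k) {0..t}"
proof -
  have "((\<lambda>s. exp (k * s)) has_integral (exp (k * t) / k - exp (k * 0) / k)) {0..t}"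
  proof (rule fundamental_theorem_of_calculus[OF assms(2)])
    fix s :: real
    have "((\<lambda>s. exp (k * s) / k) has_real_derivative (exp (k * s) * k) / k) (at s within {0..t})"
      by (intro derivative_eq_intros) (use assms(1) in auto)
    thus "((\<lambda>s. exp (k * s) / k) has_vector_derivative exp (k * s)) (at s within {0..t})"
      using assms(1) by (simp add: has_real_derivative_iff_has_vector_derivative)
  qed
  thus ?thesis by (simp add: diff_divide_distrib)
qed

context sys begin

lemma phi_cont: "t \<ge> 0 \<Longrightarrow> continuous_on K (\<lambda>y. psi (eta t x - eta (t-\<tau>) y))"
proof -
  assume t: "t \<ge> 0"
  have "continuous_on K (\<lambda>y. eta t x - eta (t-\<tau>) y)"
    using eta_cont_t[of "t-\<tau>"] t by (intro continuous_intros) auto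
  thus ?thesis by (rule continuous_on_compose2[OF psi_cont]) auto
qed

lemma phi_bounds: "t \<ge> 0 \<Longrightarrow> y \<in> K \<Longrightarrow> 0 < psi (eta t x - eta (t-\<tau>) y) \<and> psi (eta t x - eta (t-\<tau>) y) \<le> 1"
  using psit_pos psit_le1 by (simp add: psi_eq)

lemma W_norm:
  assumes t: "t \<ge> 0" and x: "x \<in> \<Omega>0" and B: "\<forall>y\<in>\<Omega>0. norm (v (t-\<tau>) y) \<le> B"
  shows "norm (W t x) \<le> B"
proof -
  define \<phi> where "\<phi> = (\<lambda>y. psi (eta t x - eta (t-\<tau>) y))"
  have c\<phi>: "continuous_on K \<phi>" unfolding \<phi>_def using phi_cont[OF t] .
  obtain m where m: "m > 0" "\<forall>y\<in>K. m \<le> \<phi> y"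
    using posmin[OF Kcompact Kne c\<phi>] phi_bounds[OF t] unfolding \<phi>_def by blast
  have mb: "\<forall>y\<in>\<Omega>0. m \<le> \<phi> y \<and> \<phi> y \<le> 1"
    using m(2) phi_bounds[OF t] closure_subset unfolding \<phi>_def by blast
  have cV: "continuous_on K (v (t-\<tau>))" using v_cont_t[of "t-\<tau>"] t by simp
  from avg_norm[OF dom(2,1) rho_nonneg rho_int rho_mass c\<phi> mb m(1) cV B]
  show ?thesis unfolding align_def \<phi>_def .
qed

lemma M_bound: "t \<ge> 0 \<Longrightarrow> M t \<le> R"
proof -
  assume t0: "t \<ge> 0"
  have "M t < R + \<epsilon>" if \<epsilon>: "\<epsilon> > 0" for \<epsilon>
  proof -
    have "\<forall>t\<ge>0. M t < (\<lambda>_. R + \<epsilon>) t"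
    proof (rule first_crossing)
      show "continuous_on {0..} M" by (rule continuous_on_subset[OF M_cont]) (use tau in auto)
      show "continuous_on {0..} (\<lambda>_. R + \<epsilon>)" by (intro continuous_intros)
      have "M 0 \<le> R" using tau by (intro M_least) (auto intro!: R_upper closure_subset[THEN subsetD])
      thus "M 0 < R + \<epsilon>" using \<epsilon> by simp
      fix t :: real assume t: "t > 0" and hyp: "\<forall>s\<in>{0..t}. M s \<le> R + \<epsilon>"
      have "norm (v t x) \<le> R + \<epsilon> * (1 - exp (-t))" if x: "x \<in> \<Omega>0" for x
      proof -
        have xK: "x \<in> K" using x closure_subset by blast
        have "norm (v t x) \<le> exp (-t) * norm (v 0 x) + exp (-t) * integral {0..t} (\<lambda>s. exp s * (R + \<epsilon>))"
        proof (rule voc[where f = "\<lambda>s. W s x"])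
          show "0 \<le> t" using t by simp
          show "continuous_on {0..t} (\<lambda>s. v s x)" by (rule continuous_on_subset[OF v_cont_x[OF xK]]) (use tau in auto)
          show "\<And>s. s \<in> {0<..<t} \<Longrightarrow> ((\<lambda>s. v s x) has_vector_derivative W s x - v s x) (at s)"
            using v_deriv x by auto
          show "continuous_on {0..t} (\<lambda>s. R + \<epsilon>)" by (intro continuous_intros)
          fix s assume s: "s \<in> {0..t}"
          show "norm (W s x) \<le> R + \<epsilon>"
          proof (rule W_norm)
            show "0 \<le> s" using s by simp
            show "x \<in> \<Omega>0" by fact
            show "\<forall>y\<in>\<Omega>0. norm (v (s - \<tau>) y) \<le> R + \<epsilon>"
            proof
              fix y assume "y \<in> \<Omega>0"
              hence yK: "y \<in> K" using closure_subset by blast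
              show "norm (v (s - \<tau>) y) \<le> R + \<epsilon>"
              proof (cases "s - \<tau> \<le> 0")
                case True
                hence "norm (v (s - \<tau>) y) \<le> R" using s yK by (intro R_upper) auto
                thus ?thesis using \<epsilon> by simp
              next
                case False
                hence "norm (v (s - \<tau>) y) \<le> M (s - \<tau>)" using yK tau by (intro M_upper) auto
                also have "\<dots> \<le> R + \<epsilon>" using hyp False s tau by auto
                finally show ?thesis .
              qed
            qed
          qed
        qed
        also have "integral {0..t} (\<lambda>s. exp s * (R + \<epsilon>)) = (exp t - 1) * (R + \<epsilon>)"
        proof -
          have "((\<lambda>s. exp (1 * s)) has_integral (exp (1 * t) - 1) / 1) {0..t}"
            using int_exp_lin[of 1 t] t by simp
          hence "((\<lambda>s. exp s * (R + \<epsilon>)) has_integral (exp t - 1) * (R + \<epsilon>)) {0..t}"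
            by (intro has_integral_mult_left) simp
          thus ?thesis by (rule integral_unique)
        qed
        also have "norm (v 0 x) \<le> R" using tau xK by (intro R_upper) auto
        hence "exp (-t) * norm (v 0 x) + exp (-t) * ((exp t - 1) * (R + \<epsilon>))
            \<le> exp (-t) * R + exp (-t) * ((exp t - 1) * (R + \<epsilon>))" by (simp add: mult_left_mono)
        also have "\<dots> = R + \<epsilon> * (1 - exp (-t))" by (simp add: exp_minus field_simps)
        finally show ?thesis .
      qed
      hence "M t \<le> R + \<epsilon> * (1 - exp (-t))" using t tau by (intro M_least) auto
      also have "\<dots> < R + \<epsilon>" using \<epsilon> by simp
      finally show "M t < R + \<epsilon>" .
    qed
    thus ?thesis using t0 by simp
  qed
  thus "M t \<le> R" by (meson field_le_epsilon less_imp_le)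
qed

lemma v_bound: "t \<ge> -\<tau> \<Longrightarrow> x \<in> K \<Longrightarrow> norm (v t x) \<le> R"
proof (cases "t \<le> 0")
  case True
  assume "t \<ge> -\<tau>" "x \<in> K" thus ?thesis using True by (intro R_upper) auto
next
  case False
  assume "t \<ge> -\<tau>" "x \<in> K"
  hence "norm (v t x) \<le> M t" by (rule M_upper)
  also have "\<dots> \<le> R" using False by (intro M_bound) simp
  finally show ?thesis .
qed

end


context sys begin

lemma DV_integrable: "-\<tau> \<le> a \<Longrightarrow> DV integrable_on {a..b}"
  by (rule integrable_continuous_interval, rule continuous_on_subset[OF DV_cont]) auto

lemma DV_int_nonneg: "-\<tau> \<le> a \<Longrightarrow> integral {a..b} DV \<ge> 0"
  by (rule integral_nonneg[OF DV_integrable]) (auto intro: DV_nonneg)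

lemma eta_shift:
  assumes s: "s \<ge> 0" and x: "x \<in> \<Omega>0"
  shows "norm (eta s x - eta (s-\<tau>) x) \<le> R * \<tau>"
proof -
  have xK: "x \<in> K" using x closure_subset by blast
  have "((\<lambda>r. v r x) has_integral eta s x - eta (s-\<tau>) x) {s-\<tau>..s}"
  proof (rule fundamental_theorem_of_calculus)
    show "s - \<tau> \<le> s" using tau by simp
    fix r assume r: "r \<in> {s-\<tau>..s}"
    hence "((\<lambda>s. eta s x) has_vector_derivative v r x) (at r within {-\<tau>..})"
      using eta_deriv x s by auto
    thus "((\<lambda>s. eta s x) has_vector_derivative v r x) (at r within {s-\<tau>..s})"
      by (rule has_vector_derivative_within_subset) (use s in auto)
  qed
  from has_integral_bound_real[OF R_nonneg finite.emptyI this] v_bound xK s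
  show ?thesis using tau by auto
qed

lemma eta_diam:
  assumes r: "r \<ge> -\<tau>" and x: "x \<in> \<Omega>0" and z: "z \<in> \<Omega>0"
  shows "norm (eta r x - eta r z) \<le> DX (-\<tau>) + integral {-\<tau>..r} DV"
proof -
  have xK: "x \<in> K" and zK: "z \<in> K" using x z closure_subset by auto
  have hi: "((\<lambda>q. v q x - v q z) has_integral (eta r x - eta r z) - (eta (-\<tau>) x - eta (-\<tau>) z)) {-\<tau>..r}"
  proof (rule fundamental_theorem_of_calculus[OF r])
    fix q assume q: "q \<in> {-\<tau>..r}"
    have "((\<lambda>s. eta s x - eta s z) has_vector_derivative v q x - v q z) (at q within {-\<tau>..})"
      using eta_deriv x z q by (intro has_vector_derivative_diff) auto
    thus "((\<lambda>s. eta s x - eta s z) has_vector_derivative v q x - v q z) (at q within {-\<tau>..r})"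
      by (rule has_vector_derivative_within_subset) auto
  qed
  have "norm ((eta r x - eta r z) - (eta (-\<tau>) x - eta (-\<tau>) z)) \<le> integral {-\<tau>..r} DV"
    unfolding integral_unique[OF hi, symmetric]
  proof (rule integral_norm_bound_integral)
    show "(\<lambda>q. v q x - v q z) integrable_on {-\<tau>..r}" using hi by blast
    show "DV integrable_on {-\<tau>..r}" by (rule DV_integrable) simp
    fix q assume "q \<in> {-\<tau>..r}"
    thus "norm (v q x - v q z) \<le> DV q" using xK zK by (intro DV_upper) auto
  qed
  moreover have "norm (eta (-\<tau>) x - eta (-\<tau>) z) \<le> DX (-\<tau>)" using xK zK by (intro DX_upper) auto
  ultimately show ?thesis using norm_triangle_ineq[of "(eta r x - eta r z) - (eta (-\<tau>) x - eta (-\<tau>) z)" "eta (-\<tau>) x - eta (-\<tau>) z"]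
    by simp
qed

definition X :: "real \<Rightarrow> real" where "X s = DX (-\<tau>) + R * \<tau> + integral {-\<tau>..s-\<tau>} DV"

lemma X_ge: "s \<ge> 0 \<Longrightarrow> DX (-\<tau>) + R * \<tau> \<le> X s"
  unfolding X_def using DV_int_nonneg[of "-\<tau>" "s-\<tau>"] by simp

lemma r0_nonneg: "0 \<le> DX (-\<tau>) + R * \<tau>"
  using DX_nonneg[of "-\<tau>"] R_nonneg tau by simp

lemma X_nonneg: "s \<ge> 0 \<Longrightarrow> 0 \<le> X s"
  using X_ge r0_nonneg by force

lemma X_bound:
  assumes s: "s \<ge> 0" and x: "x \<in> \<Omega>0" and y: "y \<in> \<Omega>0"
  shows "norm (eta s x - eta (s-\<tau>) y) \<le> X s"
proof -
  have "norm (eta s x - eta (s-\<tau>) y) \<le> norm (eta s x - eta (s-\<tau>) x) + norm (eta (s-\<tau>) x - eta (s-\<tau>) y)"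
    by (rule order_trans[OF _ norm_triangle_ineq]) simp
  also have "\<dots> \<le> R * \<tau> + (DX (-\<tau>) + integral {-\<tau>..s-\<tau>} DV)"
    using eta_shift[OF s x] eta_diam[OF _ x y, of "s-\<tau>"] s by (intro add_mono) auto
  finally show ?thesis unfolding X_def by simp
qed

lemma W_diff:
  assumes s: "s \<ge> 0" and x: "x \<in> \<Omega>0" and x': "x' \<in> \<Omega>0"
  shows "norm (W s x - W s x') \<le> (1 - psit (X s)) * DV (s-\<tau>)"
proof -
  define \<phi>1 where "\<phi>1 = (\<lambda>y. psi (eta s x - eta (s-\<tau>) y))"
  define \<phi>2 where "\<phi>2 = (\<lambda>y. psi (eta s x' - eta (s-\<tau>) y))"
  have mpos: "psit (X s) > 0" using psit_pos X_nonneg s by blast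
  have b: "\<forall>y\<in>\<Omega>0. psit (X s) \<le> psi (eta s z - eta (s-\<tau>) y) \<and> psi (eta s z - eta (s-\<tau>) y) \<le> 1"
    if z: "z \<in> \<Omega>0" for z
  proof
    fix y assume y: "y \<in> \<Omega>0"
    have "psit (X s) \<le> psit (norm (eta s z - eta (s-\<tau>) y))"
      using X_bound[OF s z y] by (intro psit_mono) auto
    moreover have "psi (eta s z - eta (s-\<tau>) y) \<le> 1" using phi_bounds[OF s] y closure_subset by blast
    ultimately show "psit (X s) \<le> psi (eta s z - eta (s-\<tau>) y) \<and> psi (eta s z - eta (s-\<tau>) y) \<le> 1"
      by (simp add: psi_eq)
  qed
  have cV: "continuous_on K (v (s-\<tau>))" using v_cont_t[of "s-\<tau>"] s by simp
  have D: "\<forall>y\<in>\<Omega>0. \<forall>z\<in>\<Omega>0. norm (v (s-\<tau>) y - v (s-\<tau>) z) \<le> DV (s-\<tau>)"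
    using closure_subset s by (auto intro!: DV_upper)
  from avg_diff[OF dom(2,1) rho_nonneg rho_int rho_mass phi_cont[OF s] b[OF x] phi_cont[OF s] b[OF x'] mpos cV D]
  show ?thesis unfolding align_def .
qed

lemma X_cont: "continuous_on {0..} X"
proof -
  have "continuous_on {0..} (\<lambda>s. integral {-\<tau>..s-\<tau>} DV)"
  proof -
    have "continuous_on {-\<tau>..} (\<lambda>u. integral {-\<tau>..u} DV)"
    proof (clarsimp simp: continuous_on_eq_continuous_within)
      fix u assume u: "-\<tau> \<le> u"
      have "continuous_on {-\<tau>..u+1} (\<lambda>u. integral {-\<tau>..u} DV)"
        by (rule indefinite_integral_continuous_1[OF DV_integrable]) simp
      hence "continuous (at u within {-\<tau>..u+1}) (\<lambda>u. integral {-\<tau>..u} DV)"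
        using u by (simp add: continuous_on_eq_continuous_within)
      moreover have "at u within {-\<tau>..} = at u within {-\<tau>..u+1}"
      proof -
        have "{-\<tau>..} \<inter> {u-1<..<u+1} = {-\<tau>..u+1} \<inter> {u-1<..<u+1}" by auto
        thus ?thesis by (intro at_within_nhd[of _ "{u-1<..<u+1}"]) auto
      qed
      ultimately show "continuous (at u within {-\<tau>..}) (\<lambda>u. integral {-\<tau>..u} DV)" by simp
    qed
    hence "continuous_on {0..} ((\<lambda>u. integral {-\<tau>..u} DV) \<circ> (\<lambda>s. s - \<tau>))"
      by (intro continuous_on_compose continuous_intros) (auto elim!: continuous_on_subset)
    thus ?thesis by (simp add: o_def)
  qed
  thus ?thesis unfolding X_def by (intro continuous_intros)
qed

definition g :: "real \<Rightarrow> real" where "g s = (1 - psit (X s)) * DV (s - \<tau>)"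

lemma g_cont: "continuous_on {0..} g"
proof -
  have "continuous_on {0..} (psit \<circ> X)"
    by (rule continuous_on_compose[OF X_cont], rule continuous_on_subset[OF psit_cont]) (auto intro: X_nonneg)
  moreover have "continuous_on {0..} (DV \<circ> (\<lambda>s. s - \<tau>))"
  proof (rule continuous_on_compose)
    show "continuous_on {0..} (\<lambda>s. s - \<tau>)" by (intro continuous_intros)
    show "continuous_on ((\<lambda>s. s - \<tau>) ` {0..}) DV" by (rule continuous_on_subset[OF DV_cont]) auto
  qed
  ultimately show ?thesis unfolding g_def by (auto simp: o_def intro!: continuous_intros)
qed

lemma g_nonneg: "s \<ge> 0 \<Longrightarrow> g s \<ge> 0"
  unfolding g_def using psit_le1[OF X_nonneg] DV_nonneg[of "s-\<tau>"] by simp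

definition Z :: "real \<Rightarrow> real" where
  "Z t = exp (-t) * DV 0 + exp (-t) * integral {0..t} (\<lambda>s. exp s * g s)"

lemma DV_le_Z: "t \<ge> 0 \<Longrightarrow> DV t \<le> Z t"
proof -
  assume t: "t \<ge> 0"
  have "norm (v t x - v t x') \<le> Z t" if x: "x \<in> \<Omega>0" and x': "x' \<in> \<Omega>0" for x x'
  proof -
    have xK: "x \<in> K" and x'K: "x' \<in> K" using x x' closure_subset by auto
    have "norm (v t x - v t x') \<le> exp (-t) * norm (v 0 x - v 0 x') + exp (-t) * integral {0..t} (\<lambda>s. exp s * g s)"
    proof (rule voc[where f = "\<lambda>s. W s x - W s x'"])
      show "0 \<le> t" by fact
      show "continuous_on {0..t} (\<lambda>s. v s x - v s x')"
        by (intro continuous_intros; rule continuous_on_subset[OF v_cont_x]) (use tau xK x'K in auto)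
      show "((\<lambda>s. v s x - v s x') has_vector_derivative W s x - W s x' - (v s x - v s x')) (at s)"
        if s: "s \<in> {0<..<t}" for s
      proof -
        have d1: "((\<lambda>s. v s x) has_vector_derivative W s x - v s x) (at s)" using v_deriv x s by auto
        have d2: "((\<lambda>s. v s x') has_vector_derivative W s x' - v s x') (at s)" using v_deriv x' s by auto
        from has_vector_derivative_diff[OF d1 d2] show ?thesis by (simp add: algebra_simps)
      qed
      show "continuous_on {0..t} g" by (rule continuous_on_subset[OF g_cont]) auto
      fix s assume "s \<in> {0..t}"
      thus "norm (W s x - W s x') \<le> g s" unfolding g_def using W_diff x x' by auto
    qed
    also have "norm (v 0 x - v 0 x') \<le> DV 0" using xK x'K tau by (intro DV_upper) auto
    hence "exp (-t) * norm (v 0 x - v 0 x') \<le> exp (-t) * DV 0" by (simp add: mult_left_mono)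
    finally show ?thesis unfolding Z_def by simp
  qed
  thus ?thesis using t tau by (intro DV_least) auto
qed

end


context sys begin

definition psie :: "real \<Rightarrow> real" where "psie r = psit (max r 0)"
definition Fp :: "real \<Rightarrow> real" where "Fp r = integral {-1..r} psie"
abbreviation "r0 \<equiv> DX (-\<tau>) + R * \<tau>"

lemma psie_cont: "continuous_on UNIV psie"
proof -
  have "continuous_on UNIV (psit \<circ> (\<lambda>r. max r 0))"
    by (rule continuous_on_compose, intro continuous_intros, rule continuous_on_subset[OF psit_cont]) auto
  thus ?thesis unfolding psie_def by (simp add: o_def)
qed

lemma psie_nonneg: "psie r \<ge> 0" unfolding psie_def using psit_pos[of "max r 0"] by simp

lemma psie_eq: "r \<ge> 0 \<Longrightarrow> psie r = psit r" unfolding psie_def by simp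

lemma psie_integrable: "psie integrable_on {a..b}"
  by (rule integrable_continuous_interval, rule continuous_on_subset[OF psie_cont]) auto

lemma Fp_deriv: "r > -1 \<Longrightarrow> (Fp has_real_derivative psie r) (at r)"
  unfolding Fp_def by (rule deriv_int_at) (auto intro: continuous_on_subset[OF psie_cont])

lemma Fp_diff: "-1 \<le> a \<Longrightarrow> a \<le> b \<Longrightarrow> Fp b - Fp a = integral {a..b} psie"
  unfolding Fp_def using Henstock_Kurzweil_Integration.integral_combine[OF _ _ psie_integrable, of "-1" a b] by simp

definition Ig :: "real \<Rightarrow> real" where "Ig t = integral {0..t} (\<lambda>s. exp s * g s)"

lemma eg_cont: "continuous_on {0..} (\<lambda>s. exp s * g s)"
  using g_cont by (intro continuous_intros)

lemma Ig_nonneg: "t \<ge> 0 \<Longrightarrow> Ig t \<ge> 0"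
  unfolding Ig_def
  by (rule integral_nonneg, rule integrable_continuous_interval, rule continuous_on_subset[OF eg_cont])
     (auto intro!: g_nonneg mult_nonneg_nonneg)

lemma Z_nonneg: "t \<ge> 0 \<Longrightarrow> Z t \<ge> 0"
  unfolding Z_def using Ig_nonneg[of t] DV_nonneg[of 0] tau unfolding Ig_def by simp

lemma Int1_cont: "continuous_on {-\<tau>..T} (\<lambda>u. integral {-\<tau>..u} DV)"
  by (rule indefinite_integral_continuous_1[OF DV_integrable]) simp

lemma Ig_cont: "continuous_on {0..T} Ig"
  unfolding Ig_def
  by (rule indefinite_integral_continuous_1, rule integrable_continuous_interval,
      rule continuous_on_subset[OF eg_cont]) auto

definition Lf :: "real \<Rightarrow> real" where
  "Lf t = Z t + integral {-\<tau>..t} DV - (X t - r0) + Fp (X t)"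

lemma X_eq: "X t = r0 + integral {-\<tau>..t-\<tau>} DV" unfolding X_def by simp

lemma X_deriv: "t > 0 \<Longrightarrow> (X has_real_derivative DV (t - \<tau>)) (at t)"
proof -
  assume t: "t > 0"
  have d: "((\<lambda>u. integral {-\<tau>..u} DV) has_real_derivative DV (t - \<tau>)) (at (t - \<tau>))"
    using t by (intro deriv_int_at[OF DV_cont]) simp
  have d2: "((\<lambda>t. t - \<tau>) has_real_derivative 1) (at t)" by (intro derivative_eq_intros) auto
  have "((\<lambda>t. r0 + integral {-\<tau>..t-\<tau>} DV) has_real_derivative 0 + DV (t - \<tau>) * 1) (at t)"
    by (intro derivative_intros DERIV_chain2[OF d d2])
  thus ?thesis unfolding X_eq[abs_def] by simp
qed

lemma Lf_deriv: "t > 0 \<Longrightarrow> (Lf has_real_derivative DV t - Z t) (at t)"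
proof -
  assume t: "t > 0"
  have dIg: "(Ig has_real_derivative exp t * g t) (at t)"
    unfolding Ig_def[abs_def] by (rule deriv_int_at[OF eg_cont t])
  have e1: "((\<lambda>t. exp (-t)) has_real_derivative - exp (-t)) (at t)"
    by (intro derivative_eq_intros) auto
  have dZ: "(Z has_real_derivative (- exp (-t) * DV 0 + 0 * exp (-t) + (- exp (-t) * Ig t + exp t * g t * exp (-t)))) (at t)"
  proof -
    have "((\<lambda>t. exp (-t) * DV 0 + exp (-t) * Ig t) has_real_derivative
        (- exp (-t) * DV 0 + 0 * exp (-t) + (- exp (-t) * Ig t + exp t * g t * exp (-t)))) (at t)"
      by (rule DERIV_add[OF DERIV_mult[OF e1 DERIV_const] DERIV_mult[OF e1 dIg]])
    moreover have "Z = (\<lambda>t. exp (-t) * DV 0 + exp (-t) * Ig t)" unfolding Z_def[abs_def] Ig_def by simp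
    ultimately show ?thesis by simp
  qed
  have dI1: "((\<lambda>u. integral {-\<tau>..u} DV) has_real_derivative DV t) (at t)"
    using t tau by (intro deriv_int_at[OF DV_cont]) simp
  have dF: "((\<lambda>t. Fp (X t)) has_real_derivative psie (X t) * DV (t - \<tau>)) (at t)"
  proof (rule DERIV_chain2[OF Fp_deriv X_deriv[OF t]])
    show "- 1 < X t" using X_nonneg[of t] t by linarith
  qed
  have "(Lf has_real_derivative
      (- exp (-t) * DV 0 + 0 * exp (-t) + (- exp (-t) * Ig t + exp t * g t * exp (-t))) + DV t - (DV (t - \<tau>) - 0)
        + psie (X t) * DV (t - \<tau>)) (at t)"
    unfolding Lf_def[abs_def]
    by (intro derivative_intros dZ dI1 X_deriv[OF t] dF)
  moreover have "(- exp (-t) * DV 0 + 0 * exp (-t) + (- exp (-t) * Ig t + exp t * g t * exp (-t))) + DV t - (DV (t - \<tau>) - 0)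
        + psie (X t) * DV (t - \<tau>) = DV t - Z t"
    using X_nonneg[of t] t psie_eq[of "X t"] unfolding Z_def g_def Ig_def
    by (simp add: exp_minus field_simps)
  ultimately show ?thesis by (rule DERIV_cong)
qed

lemma Lf_cont: "continuous_on {0..T} Lf"
proof -
  have cZ: "continuous_on {0..T} Z"
    unfolding Z_def Ig_def[symmetric] using Ig_cont by (intro continuous_intros)
  have cI: "continuous_on {0..T} (\<lambda>u. integral {-\<tau>..u} DV)"
    by (rule continuous_on_subset[OF Int1_cont]) (use tau in auto)
  have cX: "continuous_on {0..T} X" by (rule continuous_on_subset[OF X_cont]) auto
  have cF: "continuous_on (X ` {0..T}) Fp"
  proof (rule continuous_at_imp_continuous_on, clarify)
    fix s assume "s \<in> {0..T}"
    hence "X s > -1" using X_nonneg[of s] by auto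
    from Fp_deriv[OF this] show "isCont Fp (X s)" by (rule DERIV_isCont)
  qed
  have "continuous_on {0..T} (\<lambda>t. Fp (X t))" using continuous_on_compose[OF cX cF] by (simp add: o_def)
  thus ?thesis unfolding Lf_def using cZ cI cX by (intro continuous_intros)
qed

lemma Lf_le: "t \<ge> 0 \<Longrightarrow> Lf t \<le> Lf 0"
proof -
  assume t: "t \<ge> 0"
  show ?thesis
  proof (rule DERIV_nonpos_imp_decreasing_open[OF t _ Lf_cont])
    fix s :: real assume "0 < s" "s < t"
    thus "\<exists>y. (Lf has_real_derivative y) (at s) \<and> y \<le> 0"
      using Lf_deriv DV_le_Z by force
  qed
qed

definition L0 :: real where "L0 = DV 0 + integral {-\<tau>..0} DV"

lemma Lyap: "t \<ge> 0 \<Longrightarrow> integral {r0..X t} psie \<le> L0"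
proof -
  assume t: "t \<ge> 0"
  have X0: "X 0 = r0" unfolding X_eq by simp
  have Z0: "Z 0 = DV 0" unfolding Z_def by simp
  have L0eq: "Lf 0 = L0 + Fp r0" unfolding Lf_def L0_def X0 Z0 by simp
  have comb: "integral {-\<tau>..t-\<tau>} DV + integral {t-\<tau>..t} DV = integral {-\<tau>..t} DV"
    using t tau by (intro Henstock_Kurzweil_Integration.integral_combine DV_integrable) auto
  have "integral {t-\<tau>..t} DV \<ge> 0" using t by (intro DV_int_nonneg) simp
  hence "integral {-\<tau>..t} DV - (X t - r0) \<ge> 0" using comb unfolding X_eq by simp
  hence "Fp (X t) \<le> Lf t" unfolding Lf_def using Z_nonneg[OF t] by simp
  also have "\<dots> \<le> L0 + Fp r0" using Lf_le[OF t] L0eq by simp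
  finally have "Fp (X t) - Fp r0 \<le> L0" by simp
  moreover have "Fp (X t) - Fp r0 = integral {r0..X t} psie"
    using r0_nonneg X_ge[OF t] by (intro Fp_diff) auto
  ultimately show ?thesis by simp
qed

end


context sys begin

lemma psie_meas[measurable]: "psie \<in> borel_measurable borel"
  using psie_cont by (rule borel_measurable_continuous_onI)

lemma exists_xs:
  assumes flock: "ennreal L0 < (\<integral>\<^sup>+ s. ennreal (psit s) * indicator {r0..} s \<partial>lborel)"
  shows "\<exists>xs\<ge>r0. integral {r0..xs} psie > L0"
proof (rule ccontr)
  assume "\<not> ?thesis"
  hence le: "\<And>n::nat. integral {r0..r0 + real n} psie \<le> L0" by (meson le_add_same_cancel1 not_le of_nat_0_le_iff)
  define f where "f = (\<lambda>(n::nat) s. ennreal (psie s) * indicator {r0..r0 + real n} s)"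
  have pw: "ennreal (psit s) * indicator {r0..} s = (SUP n. f n s)" for s
  proof (cases "r0 \<le> s")
    case False
    thus ?thesis unfolding f_def by (simp add: indicator_def)
  next
    case True
    hence eq: "psie s = psit s" using r0_nonneg by (intro psie_eq) simp
    obtain n :: nat where n: "s - r0 \<le> real n" using real_arch_simple by blast
    have "(SUP n. f n s) = ennreal (psit s)"
    proof (rule antisym)
      show "(SUP n. f n s) \<le> ennreal (psit s)" unfolding f_def eq
        by (rule SUP_least) (simp add: indicator_def)
      have "f n s = ennreal (psit s)" unfolding f_def eq using True n by (simp add: indicator_def)
      thus "ennreal (psit s) \<le> (SUP n. f n s)" by (metis UNIV_I SUP_upper)
    qed
    thus ?thesis using True by (simp add: indicator_def)
  qed
  have inc: "incseq f"
    unfolding incseq_def f_def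
    by (auto intro!: le_funI mult_left_mono simp: indicator_def)
  have meas: "\<And>n. f n \<in> borel_measurable lborel" unfolding f_def by measurable
  have "(\<integral>\<^sup>+ s. ennreal (psit s) * indicator {r0..} s \<partial>lborel) = (\<integral>\<^sup>+ s. (SUP n. f n s) \<partial>lborel)"
    using pw by simp
  also have "\<dots> = (SUP n. integral\<^sup>N lborel (f n))"
    by (rule nn_integral_monotone_convergence_SUP[OF inc meas])
  also have "\<dots> \<le> ennreal L0"
  proof (rule SUP_least)
    fix n
    have "integral\<^sup>N lborel (f n) = (\<integral>\<^sup>+ s. ennreal (indicator {r0..r0 + real n} s * psie s) \<partial>lborel)"
      unfolding f_def by (intro nn_integral_cong) (simp add: indicator_def)
    also have "\<dots> = ennreal (integral {r0..r0 + real n} psie)"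
      by (rule nn_integral_has_integral_lebesgue) (auto intro: psie_nonneg integrable_integral psie_integrable)
    also have "\<dots> \<le> ennreal L0" using le[of n] by (rule ennreal_leI)
    finally show "integral\<^sup>N lborel (f n) \<le> ennreal L0" .
  qed
  finally show False using flock by simp
qed

end


context sys begin

lemma final:
  assumes flock: "ennreal L0 < (\<integral>\<^sup>+ s. ennreal (psit s) * indicator {r0..} s \<partial>lborel)"
  shows "bdd_above (DX ` {0..}) \<and> (\<exists>C>0. \<forall>t\<ge>0. DV t \<le> (SUP s\<in>{-\<tau>..0}. DV s) * exp (- C * t))"
proof -
  obtain xs where xs: "xs \<ge> r0" "integral {r0..xs} psie > L0" using exists_xs[OF flock] by blast
  have Xlt: "X t < xs" if t: "t \<ge> 0" for t
  proof (rule ccontr)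
    assume "\<not> X t < xs"
    hence ge: "xs \<le> X t" by simp
    have "integral {r0..xs} psie + integral {xs..X t} psie = integral {r0..X t} psie"
      using xs(1) ge by (intro Henstock_Kurzweil_Integration.integral_combine psie_integrable)
    moreover have "integral {xs..X t} psie \<ge> 0"
      by (intro integral_nonneg psie_integrable psie_nonneg)
    ultimately have "integral {r0..X t} psie > L0" using xs(2) by simp
    thus False using Lyap[OF t] by simp
  qed
  have bdd: "bdd_above (DX ` {0..})"
  proof (rule bdd_aboveI[of _ "xs - R * \<tau>"])
    fix d assume "d \<in> DX ` {0..}"
    then obtain t where t: "t \<ge> 0" "d = DX t" by auto
    have "DX t \<le> DX (-\<tau>) + integral {-\<tau>..t} DV"
      using t tau by (intro DX_least) (auto intro!: eta_diam)
    also have "\<dots> = X (t + \<tau>) - R * \<tau>" unfolding X_def by simp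
    also have "\<dots> < xs - R * \<tau>" using Xlt[of "t + \<tau>"] t tau by simp
    finally show "d \<le> xs - R * \<tau>" using t by simp
  qed
  define m where "m = psit xs"
  have mpos: "m > 0" unfolding m_def using xs(1) r0_nonneg by (intro psit_pos) simp
  have m1: "m \<le> 1" unfolding m_def using xs(1) r0_nonneg by (intro psit_le1) simp
  have gle: "g s \<le> (1 - m) * DV (s - \<tau>)" if s: "s \<ge> 0" for s
  proof -
    have "m \<le> psit (X s)" unfolding m_def using X_nonneg[OF s] Xlt[OF s] by (intro psit_mono) auto
    thus ?thesis unfolding g_def using DV_nonneg[of "s - \<tau>"] s by (intro mult_right_mono) auto
  qed
  define C where "C = m / (2 * (1 + \<tau>))"
  have Cpos: "C > 0" unfolding C_def using mpos tau by simp
  have C1: "C < 1" unfolding C_def using m1 tau mpos by (simp add: field_simps)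
  have Ctau: "C * \<tau> \<le> 1/2" unfolding C_def using m1 tau mult_left_mono[OF m1 tau] by (simp add: field_simps)
  have Ckey: "(1 - m) * exp (C * \<tau>) \<le> 1 - C"
  proof -
    have "1 - C * \<tau> \<le> exp (- (C * \<tau>))" using exp_ge_add_one_self[of "- (C * \<tau>)"] by simp
    hence "exp (C * \<tau>) * (1 - C * \<tau>) \<le> 1" by (simp add: exp_minus field_simps)
    hence e: "exp (C * \<tau>) \<le> 1 / (1 - C * \<tau>)" using Ctau by (simp add: field_simps)
    have "(1 - m) * exp (C * \<tau>) \<le> (1 - m) / (1 - C * \<tau>)"
      using mult_left_mono[OF e, of "1 - m"] m1 by simp
    also have "\<dots> \<le> 1 - C"
    proof -
      have "C * (1 + \<tau>) = m / 2" unfolding C_def using tau by (simp add: field_simps)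
      moreover have "(1 - C) * (1 - C * \<tau>) = 1 - C * (1 + \<tau>) + C * C * \<tau>" by (simp add: algebra_simps)
      moreover have "C * C * \<tau> \<ge> 0" using Cpos tau by simp
      ultimately have "1 - m \<le> (1 - C) * (1 - C * \<tau>)" using mpos by linarith
      thus ?thesis using Ctau by (simp add: field_simps)
    qed
    finally show ?thesis .
  qed
  define M0 where "M0 = (SUP s\<in>{-\<tau>..0}. DV s)"
  have bddM: "bdd_above (DV ` {-\<tau>..0})"
  proof -
    have "continuous_on {-\<tau>..0} DV" by (rule continuous_on_subset[OF DV_cont]) auto
    hence "compact (DV ` {-\<tau>..0})" by (intro compact_continuous_image) auto
    thus ?thesis by (intro bounded_imp_bdd_above compact_imp_bounded)
  qed
  have M0up: "DV s \<le> M0" if "s \<in> {-\<tau>..0}" for s unfolding M0_def using bddM that by (rule cSUP_upper2) simp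
  have DV0: "DV 0 \<le> M0" using M0up tau by simp
  have M0nn: "M0 \<ge> 0" using DV0 DV_nonneg[of 0] tau by simp
  have decay_eps: "DV t < (M0 + \<epsilon>) * exp (- C * t)" if \<epsilon>: "\<epsilon> > 0" and t0: "t \<ge> 0" for \<epsilon> t
  proof -
    have "\<forall>t\<ge>0. DV t < (\<lambda>t. (M0 + \<epsilon>) * exp (- C * t)) t"
    proof (rule first_crossing)
      show "continuous_on {0..} DV" by (rule continuous_on_subset[OF DV_cont]) (use tau in auto)
      show "continuous_on {0..} (\<lambda>t. (M0 + \<epsilon>) * exp (- C * t))" by (intro continuous_intros)
      show "DV 0 < (M0 + \<epsilon>) * exp (- C * 0)" using DV0 \<epsilon> by simp
      fix t :: real assume t: "t > 0" and hyp: "\<forall>s\<in>{0..t}. DV s \<le> (M0 + \<epsilon>) * exp (- C * s)"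
      define K0 where "K0 = (1 - m) * (M0 + \<epsilon>) * exp (C * \<tau>)"
      have K0nn: "K0 \<ge> 0" unfolding K0_def using m1 M0nn \<epsilon> by simp
      have h1: "DV (s - \<tau>) \<le> (M0 + \<epsilon>) * exp (- C * (s - \<tau>))" if s: "s \<in> {0..t}" for s
      proof (cases "s - \<tau> \<le> 0")
        case True
        have "DV (s - \<tau>) \<le> M0" using True s by (intro M0up) auto
        also have "\<dots> \<le> M0 + \<epsilon>" using \<epsilon> by simp
        also have "\<dots> \<le> (M0 + \<epsilon>) * exp (- C * (s - \<tau>))"
        proof -
          have "1 \<le> exp (- C * (s - \<tau>))" using True Cpos by (simp add: mult_nonneg_nonpos)
          thus ?thesis using M0nn \<epsilon> by (simp add: mult_left_mono[of 1, simplified])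
        qed
        finally show ?thesis .
      next
        case False thus ?thesis using hyp s tau by auto
      qed
      have pw: "exp s * g s \<le> K0 * exp ((1 - C) * s)" if s: "s \<in> {0..t}" for s
      proof -
        have "exp s * g s \<le> exp s * ((1 - m) * DV (s - \<tau>))" using gle[of s] s by (simp add: mult_left_mono)
        also have "\<dots> \<le> exp s * ((1 - m) * ((M0 + \<epsilon>) * exp (- C * (s - \<tau>))))"
          using h1[OF s] m1 by (simp add: mult_left_mono)
        also have "\<dots> = K0 * exp ((1 - C) * s)"
          unfolding K0_def by (simp add: algebra_simps flip: exp_add)
        finally show ?thesis .
      qed
      have hI: "((\<lambda>s. K0 * exp ((1 - C) * s)) has_integral K0 * ((exp ((1 - C) * t) - 1) / (1 - C))) {0..t}"
        using int_exp_lin[of "1 - C" t] C1 t by (intro has_integral_mult_right) auto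
      have "integral {0..t} (\<lambda>s. exp s * g s) \<le> K0 * ((exp ((1 - C) * t) - 1) / (1 - C))"
      proof (rule has_integral_le[OF _ hI])
        show "((\<lambda>s. exp s * g s) has_integral integral {0..t} (\<lambda>s. exp s * g s)) {0..t}"
          by (rule integrable_integral, rule integrable_continuous_interval, rule continuous_on_subset[OF eg_cont]) auto
        show "\<And>s. s \<in> {0..t} \<Longrightarrow> exp s * g s \<le> K0 * exp ((1 - C) * s)" by (rule pw)
      qed
      also have "\<dots> \<le> (M0 + \<epsilon>) * (exp ((1 - C) * t) - 1)"
      proof -
        have Q: "exp ((1 - C) * t) - 1 \<ge> 0" using C1 t by simp
        have "K0 \<le> (1 - C) * (M0 + \<epsilon>)"
          unfolding K0_def using mult_right_mono[OF Ckey, of "M0 + \<epsilon>"] M0nn \<epsilon> by (simp add: algebra_simps)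
        hence "K0 / (1 - C) \<le> M0 + \<epsilon>" using C1 by (simp add: pos_divide_le_eq mult.commute)
        hence "K0 / (1 - C) * (exp ((1 - C) * t) - 1) \<le> (M0 + \<epsilon>) * (exp ((1 - C) * t) - 1)"
          using Q by (rule mult_right_mono)
        thus ?thesis by simp
      qed
      finally have Ib: "integral {0..t} (\<lambda>s. exp s * g s) \<le> (M0 + \<epsilon>) * (exp ((1 - C) * t) - 1)" .
      have "DV t \<le> Z t" using t by (intro DV_le_Z) simp
      also have "\<dots> \<le> exp (-t) * DV 0 + exp (-t) * ((M0 + \<epsilon>) * (exp ((1 - C) * t) - 1))"
        unfolding Z_def using Ib by (simp add: mult_left_mono)
      also have "\<dots> < exp (-t) * (M0 + \<epsilon>) + exp (-t) * ((M0 + \<epsilon>) * (exp ((1 - C) * t) - 1))"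
        using DV0 \<epsilon> by simp
      also have "\<dots> = (M0 + \<epsilon>) * exp (- C * t)"
        by (simp add: algebra_simps flip: exp_add)
      finally show "DV t < (M0 + \<epsilon>) * exp (- C * t)" .
    qed
    thus ?thesis using t0 by simp
  qed
  have "\<forall>t\<ge>0. DV t \<le> M0 * exp (- C * t)"
  proof (intro allI impI)
    fix t :: real assume t: "t \<ge> 0"
    show "DV t \<le> M0 * exp (- C * t)"
    proof (rule field_le_epsilon)
      fix e :: real assume e: "e > 0"
      have "exp (- C * t) \<le> 1" using Cpos t by (simp add: mult_nonneg_nonneg)
      hence "e * exp (- C * t) \<le> e" using e by (simp add: mult_left_le_one_le)
      thus "DV t \<le> M0 * exp (- C * t) + e" using decay_eps[OF e t] by (simp add: algebra_simps)
    qed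
  qed
  thus ?thesis using bdd Cpos unfolding M0_def by blast
qed

end

theorem theorem2p2:
  fixes \<Omega>0 :: "'a::euclidean_space set"
    and \<tau> :: real
    and rho0 :: "'a \<Rightarrow> real"
    and psi :: "'a \<Rightarrow> real" and psit :: "real \<Rightarrow> real"
    and eta v :: "real \<Rightarrow> 'a \<Rightarrow> 'a"
  assumes tau: "\<tau> \<ge> 0"
    and dom: "bounded \<Omega>0" "open \<Omega>0"
    and rho_nonneg: "\<forall>x\<in>\<Omega>0. rho0 x \<ge> 0"
    and rho_int: "rho0 integrable_on \<Omega>0"
    and rho_mass: "integral \<Omega>0 rho0 = 1"
    and psi: "psi_assm psi psit"
    and eta_cont: "continuous_on ({-\<tau>..} \<times> closure \<Omega>0) (\<lambda>(t, x). eta t x)"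
    and v_cont: "continuous_on ({-\<tau>..} \<times> closure \<Omega>0) (\<lambda>(t, x). v t x)"
    and eta0: "\<forall>x\<in>\<Omega>0. eta 0 x = x"
    and eta_deriv: "\<forall>x\<in>\<Omega>0. \<forall>t\<ge>-\<tau>.
        ((\<lambda>s. eta s x) has_vector_derivative v t x) (at t within {-\<tau>..})"
    and v_deriv: "\<forall>x\<in>\<Omega>0. \<forall>t>0.
        ((\<lambda>s. v s x) has_vector_derivative (align psi rho0 \<Omega>0 eta v \<tau> t x - v t x)) (at t)"
    and RV_fin: "bdd_above ((\<lambda>(s, x). norm (v s x)) ` ({-\<tau>..0} \<times> closure \<Omega>0))"
    and flock: "ennreal (dV v \<Omega>0 0 + integral {-\<tau>..0} (dV v \<Omega>0))
        < (\<integral>\<^sup>+ s. ennreal (psit s) * indicator {dX eta \<Omega>0 (-\<tau>) + RV v \<Omega>0 \<tau> * \<tau>..} s \<partial>lborel)"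
  shows "bdd_above (dX eta \<Omega>0 ` {0..}) \<and>
         (\<exists>C>0. \<forall>t\<ge>0. dV v \<Omega>0 t \<le> (SUP s\<in>{-\<tau>..0}. dV v \<Omega>0 s) * exp (- C * t))"
proof -
  interpret S: sys \<Omega>0 \<tau> rho0 psi psit eta v
    by (rule sys.intro[OF tau dom rho_nonneg rho_int rho_mass psi eta_cont v_cont eta_deriv v_deriv RV_fin])
  have fl: "ennreal S.L0 < (\<integral>\<^sup>+ s. ennreal (psit s) * indicator {S.r0..} s \<partial>lborel)"
    using flock unfolding S.L0_def .
  from S.final[OF fl] show ?thesis .
qed

end
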